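(* Let $(\mathfrak{g},\theta)$ be a nilpotent symplectic Lie algebra over $\mathbb{R}$ and let $\nabla$ be the affine structure on $\mathfrak{g}$ defined by the symplectic cocycle $\theta$, i.e. $\nabla(X,Y)$ is the unique vector with $\theta(\nabla(X,Y),Z)=-\theta(Y,[X,Z])$ for all $Z\in\mathfrak{g}$. Let $\widetilde{\mathfrak{g}}=\mathfrak{g}\oplus\mathbb{R}$ with bracket $[(X,\alpha),(Y,\lambda)]=([X,Y],\theta(X,Y))$; this is a nilpotent contact Lie algebra with center $Z(\widetilde{\mathfrak{g}})=\{0\}\oplus\mathbb{R}$ and $\widetilde{\mathfrak{g}}/Z(\widetilde{\mathfrak{g}})\cong\mathfrak{g}$. Let $\pi:\widetilde{\mathfrak{g}}\to\mathfrak{g}$, $\pi(X,\alpha)=X$. Suppose $\widetilde{\nabla}$ is an affine structure on $\widetilde{\mathfrak{g}}$ extending $\nabla$, in the sense that $\pi(\widetilde{\nabla}((X,0),(Y,0)))=\nabla(X,Y)$ for all $X,Y\in\mathfrak{g}$. Then $\pi(\widetilde{\nabla}((X,0),T))=0$ for all $X\in\mathfrak{g}$ and all $T\in Z(\widetilde{\mathfrak{g}})$.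
   Context: A symplectic Lie algebra is a Lie algebra with a nondegenerate skew-symmetric bilinear form $\theta$ satisfying $\theta([X,Y],Z)+\theta([Y,Z],X)+\theta([Z,X],Y)=0$. An affine structure on a Lie algebra $\mathfrak{h}$ over $\mathbb{R}$ is a bilinear map $\nabla:\mathfrak{h}\times\mathfrak{h}\to\mathfrak{h}$ with $\nabla(X,Y)-\nabla(Y,X)=[X,Y]$ and $\nabla(X,\nabla(Y,Z))-\nabla(Y,\nabla(X,Z))=\nabla([X,Y],Z)$ for all $X,Y,Z\in\mathfrak{h}$; the map $\nabla$ defined from $\theta$ in the claim is such a structure. A contact Lie algebra of dimension $2p+1$ is one admitting $\omega\in\mathfrak{g}^*$ with $\omega\wedge(d\omega)^p\neq0$. *)

theory Defs
  imports "HOL-Analysis.Analysis"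
begin

definition lie_algebra :: "('a::real_vector \<Rightarrow> 'a \<Rightarrow> 'a) \<Rightarrow> bool" where
  "lie_algebra br \<longleftrightarrow> bilinear br \<and> (\<forall>x. br x x = 0) \<and>
     (\<forall>x y z. br x (br y z) + br y (br z x) + br z (br x y) = 0)"

fun lower_central :: "('a::real_vector \<Rightarrow> 'a \<Rightarrow> 'a) \<Rightarrow> nat \<Rightarrow> 'a set" where
  "lower_central br 0 = UNIV"
| "lower_central br (Suc k) = span {br x y | x y. y \<in> lower_central br k}"

definition nilpotent_lie :: "('a::real_vector \<Rightarrow> 'a \<Rightarrow> 'a) \<Rightarrow> bool" where
  "nilpotent_lie br \<longleftrightarrow> lie_algebra br \<and> (\<exists>k. lower_central br k = {0})"

definition symplectic_form :: "('a::real_vector \<Rightarrow> 'a \<Rightarrow> 'a) \<Rightarrow> ('a \<Rightarrow> 'a \<Rightarrow> real) \<Rightarrow> bool" where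
  "symplectic_form br \<theta> \<longleftrightarrow> bilinear \<theta> \<and> (\<forall>x y. \<theta> x y = - \<theta> y x) \<and>
     (\<forall>x. (\<forall>y. \<theta> x y = 0) \<longrightarrow> x = 0) \<and>
     (\<forall>x y z. \<theta> (br x y) z + \<theta> (br y z) x + \<theta> (br z x) y = 0)"

definition affine_structure :: "('a::real_vector \<Rightarrow> 'a \<Rightarrow> 'a) \<Rightarrow> ('a \<Rightarrow> 'a \<Rightarrow> 'a) \<Rightarrow> bool" where
  "affine_structure br nab \<longleftrightarrow> bilinear nab \<and>
     (\<forall>x y. nab x y - nab y x = br x y) \<and>
     (\<forall>x y z. nab x (nab y z) - nab y (nab x z) = nab (br x y) z)"

definition ext_bracket :: "('a::real_vector \<Rightarrow> 'a \<Rightarrow> 'a) \<Rightarrow> ('a \<Rightarrow> 'a \<Rightarrow> real) \<Rightarrow>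
    ('a \<times> real) \<Rightarrow> ('a \<times> real) \<Rightarrow> ('a \<times> real)" where
  "ext_bracket br \<theta> p q = (br (fst p) (fst q), \<theta> (fst p) (fst q))"

end

theory Submission
  imports Defs
begin

theorem mainTheorem4:
  fixes br :: "'a::euclidean_space \<Rightarrow> 'a \<Rightarrow> 'a"
    and \<theta> :: "'a \<Rightarrow> 'a \<Rightarrow> real"
    and nab :: "'a \<Rightarrow> 'a \<Rightarrow> 'a"
    and tnab :: "('a \<times> real) \<Rightarrow> ('a \<times> real) \<Rightarrow> ('a \<times> real)"
  assumes "nilpotent_lie br"
    and "symplectic_form br \<theta>"
    and "\<And>X Y Z. \<theta> (nab X Y) Z = - \<theta> Y (br X Z)"
    and "affine_structure (ext_bracket br \<theta>) tnab"
    and "\<And>X Y. fst (tnab (X, 0) (Y, 0)) = nab X Y"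
  shows "\<forall>X t. fst (tnab (X, 0) (0, t)) = 0"
proof -
  note nabdef = assms(3)
  have lie: "lie_algebra br" and nil: "\<exists>k. lower_central br k = {0}"
    using assms(1) unfolding nilpotent_lie_def by auto
  have bbr: "bilinear br" and brxx: "\<And>x. br x x = 0"
    and jac: "\<And>x y z. br x (br y z) + br y (br z x) + br z (br x y) = 0"
    using lie unfolding lie_algebra_def by blast+
  have bth: "bilinear \<theta>" and anti: "\<And>x y. \<theta> x y = - \<theta> y x"
    and nd: "\<And>x. (\<forall>y. \<theta> x y = 0) \<Longrightarrow> x = 0"
    using assms(2) unfolding symplectic_form_def by blast+
  have btn: "bilinear tnab"
    and comm: "\<And>x y. tnab x y - tnab y x = ext_bracket br \<theta> x y"
    and lsym: "\<And>x y z. tnab x (tnab y z) - tnab y (tnab x z) = tnab (ext_bracket br \<theta> x y) z"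
    using assms(4) unfolding affine_structure_def by blast+
  have branti: "br x y = - br y x" for x y
  proof -
    have "br (x+y) (x+y) = (br x x + br y x) + (br x y + br y y)"
      by (simp only: bilinear_ladd[OF bbr] bilinear_radd[OF bbr])
    then have "br x y + br y x = 0" by (simp add: brxx add.commute)
    then show ?thesis by (simp add: eq_neg_iff_add_eq_0)
  qed
  define E :: "'a \<times> real" where "E = (0, 1)"
  define c where "c X Y = snd (tnab (X,0) (Y,0))" for X Y
  define d where "d X = fst (tnab (X,0) E)" for X
  define \<delta> where "\<delta> X = snd (tnab (X,0) E)" for X
  define e where "e = fst (tnab E E)"
  define s where "s = snd (tnab E E)"
  have spl: "(X, l) = (X, 0) + l *\<^sub>R E" for X :: 'a and l :: real
    by (simp add: E_def)
  have L1: "tnab (X,0) (Y,0) = (nab X Y, c X Y)" for X Y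
    using assms(5) by (simp add: c_def prod_eq_iff)
  have L2: "tnab (X,0) E = (d X, \<delta> X)" for X
    by (simp add: d_def \<delta>_def)
  have L2': "tnab E (X,0) = (d X, \<delta> X)" for X
  proof -
    have "tnab (X,0) E - tnab E (X,0) = ext_bracket br \<theta> (X,0) E" by (rule comm)
    also have "\<dots> = 0" by (simp add: ext_bracket_def E_def bilinear_rzero[OF bbr] bilinear_rzero[OF bth] zero_prod_def)
    finally show ?thesis using L2 by simp
  qed
  have L3: "tnab E E = (e, s)" by (simp add: e_def s_def)
  have G: "tnab (X,l) (Y,m) = (nab X Y + m *\<^sub>R d X + l *\<^sub>R d Y + (l * m) *\<^sub>R e,
             c X Y + m * \<delta> X + l * \<delta> Y + l * m * s)" for X Y l m
  proof -
    have "tnab (X,l) (Y,m) = tnab ((X, 0) + l *\<^sub>R E) ((Y, 0) + m *\<^sub>R E)"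
      using spl by metis
    also have "\<dots> = tnab (X,0) (Y,0) + m *\<^sub>R tnab (X,0) E + l *\<^sub>R tnab E (Y,0) + (l*m) *\<^sub>R tnab E E"
      by (simp add: bilinear_ladd[OF btn] bilinear_radd[OF btn] bilinear_lmul[OF btn] bilinear_rmul[OF btn] algebra_simps)
    finally show ?thesis by (simp add: L1 L2 L2' L3)
  qed
  have z1: "nab 0 Y = 0" "nab X 0 = 0" "c 0 Y = 0" "c X 0 = 0" "d 0 = 0" "\<delta> 0 = 0" for X Y
  proof -
    have "tnab (0,0) w = 0" "tnab w (0,0) = 0" for w
      using bilinear_lzero[OF btn, of w] bilinear_rzero[OF btn, of w] by (simp_all add: zero_prod_def)
    then show "nab 0 Y = 0" "nab X 0 = 0" "c 0 Y = 0" "c X 0 = 0" "d 0 = 0" "\<delta> 0 = 0"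
      using L1[of 0 Y] L1[of X 0] L2[of 0] by (auto simp: zero_prod_def)
  qed
  have clin: "c X (a *\<^sub>R Y + b *\<^sub>R W) = a * c X Y + b * c X W" for X Y W a b
  proof -
    have eq: "(a *\<^sub>R Y + b *\<^sub>R W, 0::real) = a *\<^sub>R (Y,0) + b *\<^sub>R (W,0)" by simp
    have "tnab (X,0) (a *\<^sub>R Y + b *\<^sub>R W, 0) = a *\<^sub>R tnab (X,0) (Y,0) + b *\<^sub>R tnab (X,0) (W,0)"
      unfolding eq by (simp only: bilinear_radd[OF btn] bilinear_rmul[OF btn])
    then show ?thesis by (simp add: c_def)
  qed
  have thl: "\<theta> (a *\<^sub>R x + b *\<^sub>R y) z = a * \<theta> x z + b * \<theta> y z" for a b x y z
    by (simp add: bilinear_ladd[OF bth] bilinear_lmul[OF bth])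
  have thr: "\<theta> z (a *\<^sub>R x + b *\<^sub>R y) = a * \<theta> z x + b * \<theta> z y" for a b x y z
    by (simp add: bilinear_radd[OF bth] bilinear_rmul[OF bth])
  have thsub: "\<theta> (x - y) z = \<theta> x z - \<theta> y z" "\<theta> z (x - y) = \<theta> z x - \<theta> z y"
    "\<theta> (x + y) z = \<theta> x z + \<theta> y z" "\<theta> z (x + y) = \<theta> z x + \<theta> z y" for x y z
    by (simp_all add: bilinear_lsub[OF bth] bilinear_rsub[OF bth] bilinear_ladd[OF bth] bilinear_radd[OF bth])
  have thxx: "\<theta> x x = 0" for x using anti[of x x] by simp
  have Kid: "nab X (nab Y Z) - nab Y (nab X Z) = nab (br X Y) Z" for X Y Z
  proof -
    have "\<theta> (nab X (nab Y Z) - nab Y (nab X Z) - nab (br X Y) Z) W = 0" for W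
    proof -
      have "\<theta> (nab X (nab Y Z) - nab Y (nab X Z) - nab (br X Y) Z) W
          = \<theta> Z (br Y (br X W)) - \<theta> Z (br X (br Y W)) + \<theta> Z (br (br X Y) W)"
        by (simp add: thsub nabdef)
      also have "\<dots> = \<theta> Z (br Y (br X W) - br X (br Y W) + br (br X Y) W)"
        by (simp add: thsub)
      also have "br Y (br X W) - br X (br Y W) + br (br X Y) W = 0"
        using jac[of X Y W] branti[of W X] branti[of "br X Y" W]
        by (simp add: bilinear_rneg[OF bbr] algebra_simps)
      finally show ?thesis by (simp add: bilinear_rzero[OF bth])
    qed
    then have "nab X (nab Y Z) - nab Y (nab X Z) - nab (br X Y) Z = 0" using nd by blast
    then show ?thesis by simp
  qed
  have cant: "c X Y - c Y X = \<theta> X Y" for X Y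
    using comm[of "(X,0)" "(Y,0)"] by (simp add: L1 ext_bracket_def)
  have C: "\<theta> X Y *\<^sub>R d Z = c Y Z *\<^sub>R d X - c X Z *\<^sub>R d Y" for X Y Z
  proof -
    have "fst (tnab (X,0) (tnab (Y,0) (Z,0)) - tnab (Y,0) (tnab (X,0) (Z,0))) =
      fst (tnab (ext_bracket br \<theta> (X,0) (Y,0)) (Z,0))" using lsym by simp
    then have "nab X (nab Y Z) + c Y Z *\<^sub>R d X - (nab Y (nab X Z) + c X Z *\<^sub>R d Y)
       = nab (br X Y) Z + \<theta> X Y *\<^sub>R d Z"
      by (simp add: L1 G ext_bracket_def)
    then show ?thesis using Kid[of X Y Z] by (simp add: algebra_simps)
  qed
  have AA: "tnab E (tnab (X,0) (Y,0)) - tnab (X,0) (tnab E (Y,0)) = 0" for X Y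
    using lsym[of E "(X,0)" "(Y,0)"]
    by (simp add: ext_bracket_def E_def z1 bilinear_lzero[OF bbr] bilinear_lzero[OF bth]
        bilinear_lzero[OF btn, unfolded zero_prod_def] zero_prod_def)
  have A: "nab X (d Y) - d (nab X Y) = c X Y *\<^sub>R e - \<delta> Y *\<^sub>R d X" for X Y
    using arg_cong[OF AA[of X Y], of fst] by (simp add: L1 L2' E_def G z1 algebra_simps)
  have A': "c X (d Y) + \<delta> X * \<delta> Y = \<delta> (nab X Y) + s * c X Y" for X Y
    using arg_cong[OF AA[of X Y], of snd] by (simp add: L1 L2' E_def G z1 algebra_simps)
  have thm1: "\<theta> (k *\<^sub>R x) z = k * \<theta> x z" "\<theta> z (k *\<^sub>R x) = k * \<theta> z x" for k x z
    by (simp_all add: bilinear_lmul[OF bth] bilinear_rmul[OF bth])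
  have pair: "\<exists>V. \<theta> W V = 1" if "W \<noteq> 0" for W
  proof -
    have "\<not> (\<forall>y. \<theta> W y = 0)" using nd[of W] that by metis
    then obtain y where y: "\<theta> W y \<noteq> 0" by blast
    show ?thesis by (rule exI[of _ "(1 / \<theta> W y) *\<^sub>R y"]) (use y in \<open>simp add: thm1\<close>)
  qed
  have dlin: "d (k *\<^sub>R Y) = k *\<^sub>R d Y" "\<delta> (k *\<^sub>R Y) = k * \<delta> Y" for k Y
  proof -
    have eq: "(k *\<^sub>R Y, 0::real) = k *\<^sub>R (Y, 0)" by simp
    have "tnab (k *\<^sub>R Y, 0) E = k *\<^sub>R tnab (Y,0) E"
      unfolding eq by (simp only: bilinear_lmul[OF btn])
    then show "d (k *\<^sub>R Y) = k *\<^sub>R d Y" "\<delta> (k *\<^sub>R Y) = k * \<delta> Y" by (simp_all add: d_def \<delta>_def)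
  qed
  have P1: "d Z = 0" if d0: "\<forall>Y. \<delta> Y = 0" for Z
  proof -
    have cW: "c X (d Y - s *\<^sub>R Y) = 0" for X Y
    proof -
      have "d Y - s *\<^sub>R Y = 1 *\<^sub>R d Y + (- s) *\<^sub>R Y" by simp
      then have "c X (d Y - s *\<^sub>R Y) = c X (d Y) - s * c X Y" using clin[of X 1 "d Y" "-s" Y] by simp
      then show ?thesis using A'[of X Y] d0 by (simp add: z1)
    qed
    have cW': "c (d Y - s *\<^sub>R Y) Z = \<theta> (d Y - s *\<^sub>R Y) Z" for Y Z
      using cant[of "d Y - s *\<^sub>R Y" Z] cW[of Z Y] by simp
    show ?thesis
    proof (cases "\<exists>Y. d Y - s *\<^sub>R Y \<noteq> 0")
      case True
      then obtain Y where Y: "d Y - s *\<^sub>R Y \<noteq> 0" by blast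
      define W where "W = d Y - s *\<^sub>R Y"
      obtain V where V: "\<theta> W V = 1" using pair Y W_def by blast
      have cWW: "c X W = 0" "c W X = \<theta> W X" for X using cW cW' W_def by auto
      have dW: "d W = 0" using C[of W V W] V cWW by simp
      have key: "\<theta> W Y' *\<^sub>R d Z' = - \<theta> W Z' *\<^sub>R d Y'" for Y' Z'
        using C[of W Y' Z'] dW cWW by simp
      have "d V = - d V" using key[of V V] V by simp
      then have "(2::real) *\<^sub>R d V = 0" by (metis eq_neg_iff_add_eq_0 scaleR_2)
      then have "d V = 0" by simp
      then show ?thesis using key[of V Z] V by simp
    next
      case False
      then have dS: "d Y = s *\<^sub>R Y" for Y by auto
      show ?thesis
      proof (cases "s = 0 \<or> (\<forall>u::'a. u = 0)")
        case True
        then show ?thesis using dS z1 by (metis scale_zero_left)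
      next
        case False
        then obtain u :: 'a where u: "u \<noteq> 0" and s: "s \<noteq> 0" by blast
        obtain v where v: "\<theta> u v = 1" using pair u by blast
        have e1: "s *\<^sub>R u = c v u *\<^sub>R s *\<^sub>R u - c u u *\<^sub>R s *\<^sub>R v"
          using C[of u v u] by (simp only: v dS scaleR_one)
        have "\<theta> (s *\<^sub>R u) v = \<theta> (c v u *\<^sub>R s *\<^sub>R u - c u u *\<^sub>R s *\<^sub>R v) v" by (rule arg_cong[OF e1])
        then have "s = c v u * s" using v by (simp add: thsub thm1 thxx)
        then have cvu: "c v u = 1" using s by simp
        have e2: "s *\<^sub>R v = c v v *\<^sub>R s *\<^sub>R u - c u v *\<^sub>R s *\<^sub>R v"
          using C[of u v v] by (simp only: v dS scaleR_one)
        have "\<theta> u (s *\<^sub>R v) = \<theta> u (c v v *\<^sub>R s *\<^sub>R u - c u v *\<^sub>R s *\<^sub>R v)" by (rule arg_cong[OF e2])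
        then have hs: "s = - (c u v * s)" using v by (simp add: thsub thm1 thxx)
        have "(1 + c u v) * s = s + c u v * s" by (simp add: distrib_right)
        then have "(1 + c u v) * s = 0" using hs by linarith
        then have cuv: "c u v = -1" using s by simp
        show ?thesis using cant[of u v] cvu cuv v by simp
      qed
    qed
  qed
  have P2: "d Z = 0" if br0: "\<forall>X Y. br X Y = 0" for Z
  proof -
    have nab0: "nab X Y = 0" for X Y
    proof -
      have "\<forall>W. \<theta> (nab X Y) W = 0" using nabdef br0 by (simp add: bilinear_rzero[OF bth])
      then show ?thesis using nd by blast
    qed
    have A0: "c X Y *\<^sub>R e = \<delta> Y *\<^sub>R d X" for X Y
      using A[of X Y] by (simp add: nab0 z1)
    have A0': "c X (d Y) + \<delta> X * \<delta> Y = s * c X Y" for X Y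
      using A'[of X Y] by (simp add: nab0 z1)
    show ?thesis
    proof (cases "\<forall>Y. \<delta> Y = 0")
      case True
      then show ?thesis using P1 by blast
    next
      case False
      then obtain Y1' where Y1': "\<delta> Y1' \<noteq> 0" by blast
      define Y1 where "Y1 = (1 / \<delta> Y1') *\<^sub>R Y1'"
      have dY1: "\<delta> Y1 = 1" using Y1' by (simp add: Y1_def dlin)
      show ?thesis
      proof (cases "e = 0")
        case True
        then show ?thesis using A0[of Z Y1] dY1 by simp
      next
        case False
        define \<kappa> where "\<kappa> X = c X Y1" for X
        have dk: "d X = \<kappa> X *\<^sub>R e" for X using A0[of X Y1] dY1 by (simp add: \<kappa>_def)
        have cf: "c X Y = \<delta> Y * \<kappa> X" for X Y
        proof -
          have "c X Y *\<^sub>R e = (\<delta> Y * \<kappa> X) *\<^sub>R e" using A0[of X Y] dk[of X] by simp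
          then show ?thesis using False by simp
        qed
        have A2: "\<kappa> Y * (\<delta> e * \<kappa> X) + \<delta> X * \<delta> Y = s * (\<delta> Y * \<kappa> X)" for X Y
        proof -
          have "c X (d Y) = \<kappa> Y * c X e" using clin[of X "\<kappa> Y" e 0 e] dk[of Y] by simp
          then show ?thesis using A0'[of X Y] cf[of X e] cf[of X Y] by simp
        qed
        have th: "\<theta> X Y = \<delta> Y * \<kappa> X - \<delta> X * \<kappa> Y" for X Y
          using cant[of X Y] cf[of X Y] cf[of Y X] by simp
        have "Y1 \<noteq> 0" using dY1 z1 by auto
        then obtain V where V: "\<theta> Y1 V = 1" using pair by blast
        have m1: "\<kappa> V * (\<delta> e * \<kappa> Y1) = \<kappa> Y1 * (\<delta> e * \<kappa> V)" "\<delta> Y1 * \<delta> V = \<delta> V * \<delta> Y1"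
          by (simp_all add: mult_ac)
        have "s * (\<delta> V * \<kappa> Y1) - s * (\<delta> Y1 * \<kappa> V) = 0"
          using A2[of Y1 V] A2[of V Y1] m1 by linarith
        moreover have "s * \<theta> Y1 V = s * (\<delta> V * \<kappa> Y1) - s * (\<delta> Y1 * \<kappa> V)"
          using th[of Y1 V] by (simp add: right_diff_distrib)
        ultimately have "s * \<theta> Y1 V = 0" by simp
        then have s0: "s = 0" using V by simp
        have h1: "\<delta> V = - \<delta> e * \<kappa> Y1 * \<kappa> V" using A2[of Y1 V] s0 dY1 by (simp add: algebra_simps)
        have h2: "1 = - \<delta> e * \<kappa> Y1 * \<kappa> Y1" using A2[of Y1 Y1] s0 dY1 by (simp add: algebra_simps)
        have "\<theta> Y1 V = \<kappa> V * (- \<delta> e * \<kappa> Y1 * \<kappa> Y1) - \<kappa> V"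
          using th[of Y1 V] h1 dY1 by (simp add: algebra_simps)
        also have "\<dots> = 0" using h2 by simp
        finally show ?thesis using V by simp
      qed
    qed
  qed
  have P3: "\<forall>X Y. br X Y = 0" if Z0: "d Z0 \<noteq> 0" for Z0
  proof -
    define w where "w = d Z0"
    have ww: "inner w w > 0" using Z0 w_def by simp
    define a where "a X = inner (d X) w / inner w w" for X
    define b where "b X = c X Z0" for X
    have rank: "\<theta> X Y = b Y * a X - b X * a Y" for X Y
    proof -
      have "\<theta> X Y *\<^sub>R w = b Y *\<^sub>R d X - b X *\<^sub>R d Y" using C[of X Y Z0] by (simp add: w_def b_def)
      then have "inner (\<theta> X Y *\<^sub>R w) w = inner (b Y *\<^sub>R d X - b X *\<^sub>R d Y) w" by simp
      then have "\<theta> X Y * inner w w = b Y * inner (d X) w - b X * inner (d Y) w"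
        by (simp add: inner_diff_left)
      then have "\<theta> X Y = (b Y * inner (d X) w - b X * inner (d Y) w) / inner w w"
        using ww by (simp add: field_simps)
      then show ?thesis using ww by (simp add: a_def field_simps)
    qed
    have central: "\<exists>z0. z0 \<noteq> 0 \<and> (\<forall>x. br x z0 = 0)"
    proof -
      obtain k where k: "lower_central br k = {0}" using nil by blast
      have n0: "\<not> lower_central br 0 = {0}" using Z0 w_def by auto
      obtain j where j: "lower_central br j \<noteq> {0}" "lower_central br (Suc j) = {0}"
        using ex_least_nat_less[of "\<lambda>j. lower_central br j = {0}" k, OF k n0] by blast
      have "0 \<in> lower_central br j" by (cases j) (auto simp: span_zero)
      then obtain z0 where z0: "z0 \<in> lower_central br j" "z0 \<noteq> 0" using j(1) by blast
      have "br x z0 \<in> lower_central br (Suc j)" for x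
        using z0(1) by (auto intro!: span_base)
      then show ?thesis using z0(2) j(2) by blast
    qed
    then obtain z0 where z0: "z0 \<noteq> 0" "\<And>x. br x z0 = 0" by blast
    have z0': "br z0 x = 0" for x using branti[of z0 x] z0(2)[of x] by simp
    obtain Y0 where Y0: "\<theta> z0 Y0 = 1" using pair z0(1) by blast
    have decomp: "X = \<theta> X Y0 *\<^sub>R z0 + \<theta> z0 X *\<^sub>R Y0" for X
    proof -
      define R where "R = X - \<theta> X Y0 *\<^sub>R z0 - \<theta> z0 X *\<^sub>R Y0"
      have t1: "\<theta> R z0 = 0"
        using anti[of X z0] anti[of Y0 z0] Y0 by (simp add: R_def thsub thm1 thxx)
      have t2: "\<theta> R Y0 = 0"
        using Y0 by (simp add: R_def thsub thm1 thxx)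
      have p1: "b z0 * a R = b R * a z0" using t1 rank[of R z0] by simp
      have p2: "b Y0 * a R = b R * a Y0" using t2 rank[of R Y0] by simp
      have p3: "b Y0 * a z0 - b z0 * a Y0 = 1" using Y0 rank[of z0 Y0] by simp
      have "a R = a R * (b Y0 * a z0 - b z0 * a Y0)" using p3 by simp
      also have "\<dots> = a z0 * (b Y0 * a R) - a Y0 * (b z0 * a R)" by (simp add: algebra_simps)
      also have "\<dots> = a z0 * (b R * a Y0) - a Y0 * (b R * a z0)" using p1 p2 by simp
      also have "\<dots> = 0" by (simp add: algebra_simps)
      finally have aR: "a R = 0" .
      have "b R = b R * (b Y0 * a z0 - b z0 * a Y0)" using p3 by simp
      also have "\<dots> = b Y0 * (b R * a z0) - b z0 * (b R * a Y0)" by (simp add: algebra_simps)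
      also have "\<dots> = b Y0 * (b z0 * a R) - b z0 * (b Y0 * a R)" using p1 p2 by simp
      also have "\<dots> = 0" by (simp add: algebra_simps)
      finally have bR: "b R = 0" .
      have "\<forall>W. \<theta> R W = 0" using rank aR bR by simp
      then have "R = 0" using nd by blast
      then show ?thesis by (simp add: R_def algebra_simps)
    qed
    show ?thesis
    proof (intro allI)
      fix X Y
      have "br X Y = br (\<theta> X Y0 *\<^sub>R z0 + \<theta> z0 X *\<^sub>R Y0) (\<theta> Y Y0 *\<^sub>R z0 + \<theta> z0 Y *\<^sub>R Y0)"
        using decomp[of X] decomp[of Y] by simp
      also have "\<dots> = 0"
        by (simp add: bilinear_ladd[OF bbr] bilinear_radd[OF bbr] bilinear_lmul[OF bbr]
            bilinear_rmul[OF bbr] z0(2) z0' brxx)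
      finally show "br X Y = 0" .
    qed
  qed
  have d0: "d Z = 0" for Z
  proof (rule ccontr)
    assume "d Z \<noteq> 0"
    then have "\<forall>X Y. br X Y = 0" by (rule P3)
    then have "d Z = 0" by (rule P2)
    then show False using \<open>d Z \<noteq> 0\<close> by simp
  qed
  show ?thesis
  proof (intro allI)
    fix X t
    show "fst (tnab (X, 0) (0, t)) = 0" using G[of X 0 0 t] by (simp add: d0 z1)
  qed
qed

end
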